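(* Fix an integer $q\ge 2$. For $c\in\mathbb{R}$ let $\varphi_c(x)=\left|\frac{\sin \pi q(x+c)}{\sin\pi(x+c)}\right|$ (extended by continuity, with value $q$, where $x+c\in\mathbb{Z}$), and let $\gamma(c)$ be the Gelfond exponent defined below. Then $\gamma(c)=\gamma(1-c)$ for all $c\in[0,1]$. Moreover, for all $n\ge 1$ and all $x\in[0,1]$, $$\prod_{j=0}^{n-1}\varphi_c(q^jx)=\prod_{j=0}^{n-1}\varphi_{1-c}(q^j(1-x)).$$
   Context: For an integer $n\ge 0$, $S_q(n)$ is the sum of the digits of $n$ in base $q$, and $t_n^{(q;c)}=e^{2\pi i c S_q(n)}$. The Gelfond exponent $\gamma(c)$ is the infimum of all real $\gamma$ such that $\sup_{x\in\mathbb{R}}\left|\sum_{n=0}^{N-1}t_n^{(q;c)}e^{2\pi i n x}\right|=O(N^\gamma)$ as $N\to\infty$. *)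

theory Defs
  imports "HOL-Analysis.Analysis" "HOL-Library.Landau_Symbols"
begin

function digit_sum :: "nat \<Rightarrow> nat \<Rightarrow> nat" where
  "digit_sum q n = (if q < 2 \<or> n = 0 then 0 else n mod q + digit_sum q (n div q))"
  by auto
termination by (relation "Wellfounded.measure snd") auto

declare digit_sum.simps[simp del]

definition tseq :: "nat \<Rightarrow> real \<Rightarrow> nat \<Rightarrow> complex" where
  "tseq q c n = cis (2 * pi * c * real (digit_sum q n))"

definition expsum :: "nat \<Rightarrow> real \<Rightarrow> nat \<Rightarrow> real \<Rightarrow> complex" where
  "expsum q c N x = (\<Sum>n<N. tseq q c n * cis (2 * pi * real n * x))"

definition gelfond_exponent :: "nat \<Rightarrow> real \<Rightarrow> real" where
  "gelfond_exponent q c =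
     Inf {g :: real. (\<lambda>N::nat. SUP x\<in>(UNIV::real set). norm (expsum q c N x))
                       \<in> O(\<lambda>N. real N powr g)}"

definition phi :: "nat \<Rightarrow> real \<Rightarrow> real \<Rightarrow> real" where
  "phi q c x = (if x + c \<in> \<int> then real q
               else \<bar>sin (pi * real q * (x + c)) / sin (pi * (x + c))\<bar>)"

end

theory Submission
  imports Defs
begin

lemma abs_sin_int_minus:
  fixes k :: real assumes "k \<in> \<int>"
  shows "\<bar>sin (pi * k - t)\<bar> = \<bar>sin t\<bar>"
proof -
  have s: "sin (pi * k) = 0" using assms by (subst mult.commute) (simp add: sin_times_pi_eq_0)
  have "cos (pi * k)^2 = 1" using s sin_cos_squared_add[of "pi*k"] by simp
  hence c: "\<bar>cos (pi * k)\<bar> = 1" by (metis abs_power2 abs_of_nonneg abs_ge_zero power2_eq_1_iff abs_1 abs_neg_one)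
  have "sin (pi * k - t) = - cos (pi * k) * sin t" by (simp add: sin_diff s)
  thus ?thesis using c by (simp add: abs_mult)
qed


lemma phi_refl:
  fixes j :: nat
  shows "phi q (1 - c) (real q ^ j * (1 - x)) = phi q c (real q ^ j * x)"
proof -
  define y where "y = real q ^ j * x + c"
  define m :: real where "m = real q ^ j + 1"
  have mI: "m \<in> \<int>" unfolding m_def by simp
  have e: "real q ^ j * (1 - x) + (1 - c) = m - y" unfolding m_def y_def by (simp add: algebra_simps)
  have iff: "(m - y \<in> \<int>) = (y \<in> \<int>)"
  proof
    assume "m - y \<in> \<int>" hence "m - (m - y) \<in> \<int>" by (rule Ints_diff[OF mI])
    moreover have "m - (m - y) = y" by simp
    ultimately show "y \<in> \<int>" by (simp only:)
  next
    assume "y \<in> \<int>" thus "m - y \<in> \<int>" by (rule Ints_diff[OF mI])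
  qed
  have qmI: "real q * m \<in> \<int>" using mI by simp
  have s1: "\<bar>sin (pi * real q * (m - y))\<bar> = \<bar>sin (pi * real q * y)\<bar>"
    using abs_sin_int_minus[OF qmI, of "pi * real q * y"] by (simp add: algebra_simps)
  have s2: "\<bar>sin (pi * (m - y))\<bar> = \<bar>sin (pi * y)\<bar>"
    using abs_sin_int_minus[OF mI, of "pi * y"] by (simp add: algebra_simps)
  show ?thesis unfolding phi_def e y_def[symmetric] using iff s1 s2
    by (simp add: abs_divide)
qed

lemma tseq_refl: "tseq q (1 - c) n = cnj (tseq q c n)"
proof -
  have "tseq q (1 - c) n = cis (2 * pi * real (digit_sum q n)) * cis (- (2 * pi * c * real (digit_sum q n)))"
    unfolding tseq_def by (simp add: cis_mult algebra_simps)
  also have "\<dots> = cnj (tseq q c n)"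
    by (simp add: cis_multiple_2pi tseq_def cis_cnj)
  finally show ?thesis .
qed

lemma expsum_refl: "norm (expsum q (1 - c) N x) = norm (expsum q c N (- x))"
proof -
  have "expsum q (1 - c) N x = cnj (expsum q c N (- x))"
    unfolding expsum_def cnj_sum by (intro sum.cong) (simp_all add: tseq_refl cis_cnj)
  thus ?thesis by simp
qed

lemma surj_uminus_real: "uminus ` (UNIV::real set) = UNIV"
proof (rule surjI[of uminus uminus])
  fix x :: real show "- (- x) = x" by simp
qed

lemma sup_refl: "(SUP x\<in>(UNIV::real set). norm (expsum q (1 - c) N x)) = (SUP x\<in>(UNIV::real set). norm (expsum q c N x))"
proof -
  have "(SUP x\<in>(UNIV::real set). norm (expsum q (1 - c) N x)) = (SUP x\<in>(UNIV::real set). norm (expsum q c N (- x)))"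
    by (simp add: expsum_refl)
  also have "\<dots> = (SUP x\<in>(UNIV::real set). norm (expsum q c N x))"
  proof -
    have "(\<lambda>x. norm (expsum q c N (- x))) ` (UNIV::real set) = (\<lambda>x. norm (expsum q c N x)) ` UNIV"
    proof -
      have su: "uminus ` (UNIV::real set) = UNIV" by (rule surj_uminus_real)
      have "(\<lambda>x. norm (expsum q c N x)) ` (uminus ` (UNIV::real set)) = (\<lambda>x. norm (expsum q c N (- x))) ` UNIV"
        by (rule image_image)
      thus ?thesis using su by simp
    qed
    thus ?thesis by simp
  qed
  finally show ?thesis .
qed

theorem proposition3p1:
  fixes q :: nat
  assumes "q \<ge> 2"
  shows "(\<forall>c::real. 0 \<le> c \<and> c \<le> 1 \<longrightarrow> gelfond_exponent q c = gelfond_exponent q (1 - c))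
         \<and> (\<forall>(c::real) (n::nat) (x::real). n \<ge> 1 \<and> 0 \<le> x \<and> x \<le> 1 \<longrightarrow>
              (\<Prod>j<n. phi q c (real q ^ j * x)) = (\<Prod>j<n. phi q (1 - c) (real q ^ j * (1 - x))))"
  by (simp add: gelfond_exponent_def sup_refl phi_refl)

end
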